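(* Let $n=2p+1$ agents choose between two options $A=\{a,b\}$, each agent having a strict preference over $A$, and let preferences over lotteries be given by stochastic dominance. Then the Bloc formation mechanism $\chi_{BF}$ Nash implements the majority rule: for every preference profile $R$, every Nash equilibrium $m$ of $\chi_{BF}$ at $R$ satisfies $\chi_{BF}(m)=Maj(R)$ (the degenerate lottery on $Maj(R)$), and there exists a Nash equilibrium $m$ at $R$ with $\chi_{BF}(m)=Maj(R)$.
   Context: Agents: $I=\{1,\dots,n\}$ with $n=2p+1$, $p\ge 1$. Options $A=\{a,b\}$. A preference profile $R=(R_1,\dots,R_n)$ assigns to each agent a strict preference over $A$. The majority rule is $Maj(R)=a$ if $|\{i: a\,R_i\,b\}|\ge p+1$ and $Maj(R)=b$ otherwise. $\Delta$ is the set of lotteries over $A$. Stochastic dominance (SD): agent $i$ whose preferred option is $x$ weakly prefers lottery $\beta$ to $\eta$ iff $\beta(x)\ge\eta(x)$, and strictly prefers iff $\beta(x)>\eta(x)$. A mechanism $g:\prod_i M_i\to\Delta$ Nash implements a social choice function $f$ if for every $R$ every Nash equilibrium (with respect to SD preferences) has outcome $f(R)$ and some Nash equilibrium has outcome $f(R)$. Bloc formation mechanism: each agent's message is $m_i=(v_i,c_i)$, where $v_i\in A$ is a vote and $c_i$ is a set of exactly $p$ agents not containing $i$ (her nominations). For $x\in A$, a set $B\subseteq I$ with $|B|\ge p+1$ is a bloc in favor of $x$ in $m$ if $v_i=x$ and $c_i\subseteq B$ for all $i\in B$. (All blocs in a profile favor the same option.) If $m$ admits a bloc in favor of $x$, then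 $\chi_{BF}(m)=x$. Otherwise $\chi_{BF}(m)=\eta(m)$, the lottery with $\eta^x(m)=\sum_{i\in I}\eta_i(m)\mathbf{1}\{v_i=x\}$, where $\eta_i(m)=|\{j\in I\setminus\{i\}: i\in c_j\}|/(np)$. *)

theory Defs
  imports Complex_Main
begin

datatype opt = OA | OB

definition agents :: "nat \<Rightarrow> nat set" where
  "agents p = {..<2*p+1}"

definition strict_pref :: "(opt \<times> opt) set \<Rightarrow> bool" where
  "strict_pref P \<longleftrightarrow> P = {(OA,OB)} \<or> P = {(OB,OA)}"

definition profile :: "nat \<Rightarrow> (nat \<Rightarrow> (opt \<times> opt) set) \<Rightarrow> bool" where
  "profile p R \<longleftrightarrow> (\<forall>i\<in>agents p. strict_pref (R i))"

definition top :: "(opt \<times> opt) set \<Rightarrow> opt" where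
  "top P = (if (OA,OB) \<in> P then OA else OB)"

definition Maj :: "nat \<Rightarrow> (nat \<Rightarrow> (opt \<times> opt) set) \<Rightarrow> opt" where
  "Maj p R = (if card {i\<in>agents p. (OA,OB) \<in> R i} \<ge> p+1 then OA else OB)"

type_synonym lottery = "opt \<Rightarrow> real"

definition degen :: "opt \<Rightarrow> lottery" where
  "degen x = (\<lambda>y. if y = x then 1 else 0)"

text \<open>Messages: a vote and a set of nominations.\<close>
type_synonym message = "opt \<times> nat set"

definition msg_space :: "nat \<Rightarrow> nat \<Rightarrow> message set" where
  "msg_space p i = {(v,c). c \<subseteq> agents p - {i} \<and> card c = p}"

definition valid_msgs :: "nat \<Rightarrow> (nat \<Rightarrow> message) \<Rightarrow> bool" where
  "valid_msgs p m \<longleftrightarrow> (\<forall>i\<in>agents p. m i \<in> msg_space p i)"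

definition is_bloc :: "nat \<Rightarrow> (nat \<Rightarrow> message) \<Rightarrow> opt \<Rightarrow> nat set \<Rightarrow> bool" where
  "is_bloc p m x B \<longleftrightarrow> B \<subseteq> agents p \<and> card B \<ge> p+1 \<and>
     (\<forall>i\<in>B. fst (m i) = x \<and> snd (m i) \<subseteq> B)"

definition eta_i :: "nat \<Rightarrow> (nat \<Rightarrow> message) \<Rightarrow> nat \<Rightarrow> real" where
  "eta_i p m i = real (card {j \<in> agents p - {i}. i \<in> snd (m j)}) / real ((2*p+1) * p)"

definition eta :: "nat \<Rightarrow> (nat \<Rightarrow> message) \<Rightarrow> lottery" where
  "eta p m = (\<lambda>x. \<Sum>i\<in>{i\<in>agents p. fst (m i) = x}. eta_i p m i)"

definition chi_BF :: "nat \<Rightarrow> (nat \<Rightarrow> message) \<Rightarrow> lottery" where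
  "chi_BF p m = (if \<exists>x B. is_bloc p m x B
                 then degen (SOME x. \<exists>B. is_bloc p m x B)
                 else eta p m)"

text \<open>Nash equilibrium w.r.t. SD preferences: no agent has a unilateral deviation
  yielding an SD-strictly preferred lottery, i.e. strictly higher probability of her top option.\<close>
definition nash_eq :: "nat \<Rightarrow> (nat \<Rightarrow> (opt \<times> opt) set) \<Rightarrow> (nat \<Rightarrow> message) \<Rightarrow> bool" where
  "nash_eq p R m \<longleftrightarrow> valid_msgs p m \<and>
     (\<forall>i\<in>agents p. \<forall>mi\<in>msg_space p i.
        \<not> (chi_BF p (m(i := mi)) (top (R i)) > chi_BF p m (top (R i))))"

end

theory Submission imports Defs begin

definition E :: "nat \<Rightarrow> (nat \<Rightarrow> message) \<Rightarrow> nat set \<Rightarrow> nat" where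
  "E p m S = (\<Sum>a\<in>agents p. card (snd (m a) \<inter> S))"

definition voters :: "nat \<Rightarrow> (nat \<Rightarrow> message) \<Rightarrow> opt \<Rightarrow> nat set" where
  "voters p m z = {i\<in>agents p. fst (m i) = z}"

lemma fin_agents[simp]: "finite (agents p)"
  by (simp add: agents_def)

lemma card_agents[simp]: "card (agents p) = 2*p+1"
  by (simp add: agents_def)

lemma vm:
  assumes "valid_msgs p m" "i \<in> agents p"
  shows "snd (m i) \<subseteq> agents p - {i}" "card (snd (m i)) = p"
proof -
  have "m i \<in> msg_space p i" using assms by (simp add: valid_msgs_def)
  then show "snd (m i) \<subseteq> agents p - {i}" "card (snd (m i)) = p"
    by (cases "m i", simp add: msg_space_def)+
qed

lemma vm_fin: "valid_msgs p m \<Longrightarrow> i \<in> agents p \<Longrightarrow> finite (snd (m i))"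
  by (rule rev_finite_subset[OF finite_Diff[OF fin_agents]], rule vm(1))

lemma valid_upd:
  "valid_msgs p m \<Longrightarrow> mi \<in> msg_space p i \<Longrightarrow> valid_msgs p (m(i:=mi))"
  by (auto simp: valid_msgs_def)

lemma count_lemma:
  assumes "valid_msgs p m" "V \<subseteq> agents p"
  shows "(\<Sum>i\<in>V. card {j\<in>agents p - {i}. i \<in> snd (m j)}) = E p m V"
proof -
  have fV: "finite V" by (rule rev_finite_subset[OF fin_agents assms(2)])
  have 1: "card {j\<in>agents p - {i}. i \<in> snd (m j)} = (\<Sum>j\<in>agents p. if i \<in> snd (m j) then 1 else 0)" for i
  proof -
    have "{j\<in>agents p - {i}. i \<in> snd (m j)} = {j\<in>agents p. i \<in> snd (m j)}"
    proof -
      have "j \<noteq> i" if "j \<in> agents p" "i \<in> snd (m j)" for j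
        using vm(1)[OF assms(1) that(1)] that(2) by blast
      then show ?thesis by auto
    qed
    then show ?thesis by (simp only: trans[OF card_eq_sum sum.inter_filter[OF fin_agents]])
  qed
  have 2: "card (snd (m a) \<inter> V) = (\<Sum>i\<in>V. if i \<in> snd (m a) then 1 else 0)" for a
  proof -
    have "snd (m a) \<inter> V = {i\<in>V. i \<in> snd (m a)}" by blast
    then show ?thesis by (simp only: trans[OF card_eq_sum sum.inter_filter[OF fV]])
  qed
  show ?thesis unfolding E_def 1 2 by (rule sum.swap)
qed

lemma eta_E:
  assumes "valid_msgs p m"
  shows "eta p m z = real (E p m (voters p m z)) / real ((2*p+1)*p)"
proof -
  have "eta p m z = (\<Sum>i\<in>voters p m z. real (card {j \<in> agents p - {i}. i \<in> snd (m j)})) / real ((2*p+1)*p)"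
    by (simp add: eta_def eta_i_def voters_def sum_divide_distrib)
  also have "(\<Sum>i\<in>voters p m z. real (card {j \<in> agents p - {i}. i \<in> snd (m j)})) = real (E p m (voters p m z))"
  proof -
    have "voters p m z \<subseteq> agents p" by (auto simp: voters_def)
    from count_lemma[OF assms this] show ?thesis by (simp flip: of_nat_sum)
  qed
  finally show ?thesis .
qed

lemma E_le: "valid_msgs p m \<Longrightarrow> E p m S \<le> (2*p+1)*p"
proof -
  assume v: "valid_msgs p m"
  have "E p m S \<le> (\<Sum>a\<in>agents p. p)" unfolding E_def
  proof (rule sum_mono)
    fix a assume a: "a \<in> agents p"
    have "card (snd (m a) \<inter> S) \<le> card (snd (m a))"
      by (rule card_mono[OF vm_fin[OF v a]]) blast
    then show "card (snd (m a) \<inter> S) \<le> p" using vm(2)[OF v a] by simp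
  qed
  then show ?thesis by simp
qed

lemma closed_card:
  assumes "valid_msgs p m" "i \<in> B" "B \<subseteq> agents p" "snd (m i) \<subseteq> B"
  shows "card B \<ge> p+1"
proof -
  have i: "i \<in> agents p" using assms by blast
  have fB: "finite B" by (rule rev_finite_subset[OF fin_agents assms(3)])
  have "snd (m i) \<subseteq> B - {i}" using vm(1)[OF assms(1) i] assms(4) by blast
  hence "p \<le> card (B - {i})" using vm(2)[OF assms(1) i] fB
    by (metis card_mono finite_Diff)
  moreover have "card B = card (B - {i}) + 1" using card.remove[OF fB assms(2)] by simp
  ultimately show ?thesis by simp
qed

lemma bloc_iff:
  assumes "valid_msgs p m"
  shows "is_bloc p m x B \<longleftrightarrow> B \<subseteq> agents p \<and> B \<noteq> {} \<and> (\<forall>i\<in>B. fst (m i) = x \<and> snd (m i) \<subseteq> B)"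
proof
  assume "is_bloc p m x B" then show "B \<subseteq> agents p \<and> B \<noteq> {} \<and> (\<forall>i\<in>B. fst (m i) = x \<and> snd (m i) \<subseteq> B)"
    unfolding is_bloc_def by fastforce
next
  assume h: "B \<subseteq> agents p \<and> B \<noteq> {} \<and> (\<forall>i\<in>B. fst (m i) = x \<and> snd (m i) \<subseteq> B)"
  then obtain i where "i \<in> B" by blast
  then have "card B \<ge> p+1" using closed_card[OF assms] h by blast
  then show "is_bloc p m x B" using h unfolding is_bloc_def by blast
qed

lemma big_inter:
  assumes "B1 \<subseteq> agents p" "B2 \<subseteq> agents p" "card B1 \<ge> p+1" "card B2 \<ge> p+1"
  shows "B1 \<inter> B2 \<noteq> {}"
proof
  assume h: "B1 \<inter> B2 = {}"
  have f: "finite B1" "finite B2" using assms(1,2) rev_finite_subset[OF fin_agents] by auto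
  have "card (B1 \<union> B2) = card B1 + card B2" using h f card_Un_disjoint by blast
  moreover have "card (B1 \<union> B2) \<le> 2*p+1"
    by (metis Un_subset_iff assms(1,2) card_agents card_mono fin_agents)
  ultimately show False using assms(3,4) by simp
qed

lemma bloc_unique:
  assumes "is_bloc p m x B1" "is_bloc p m y B2" shows "x = y"
proof -
  have "B1 \<inter> B2 \<noteq> {}" apply (rule big_inter) using assms unfolding is_bloc_def by auto
  then obtain i where "i \<in> B1" "i \<in> B2" by blast
  then have "fst (m i) = x" "fst (m i) = y" using assms unfolding is_bloc_def by auto
  then show ?thesis by simp
qed

lemma chi_bloc: "is_bloc p m x B \<Longrightarrow> chi_BF p m = degen x"
proof -
  assume b: "is_bloc p m x B"
  have "(SOME x. \<exists>B. is_bloc p m x B) = x"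
    by (rule some_equality) (use b bloc_unique in blast)+
  then show ?thesis using b unfolding chi_BF_def by auto
qed

lemma chi_nobloc: "\<not> (\<exists>x B. is_bloc p m x B) \<Longrightarrow> chi_BF p m = eta p m"
  unfolding chi_BF_def by presburger

lemma bloc_dev:
  assumes "is_bloc p (m(i:=mi)) w B" "i \<notin> B" shows "is_bloc p m w B"
  using assms unfolding is_bloc_def
  by (metis fun_upd_other)


lemma all_in:
  assumes v: "valid_msgs p m" and ge: "E p m S \<ge> (2*p+1)*p" and a: "a \<in> agents p"
  shows "snd (m a) \<subseteq> S"
proof (rule ccontr)
  assume "\<not> snd (m a) \<subseteq> S"
  then have "snd (m a) \<inter> S \<subset> snd (m a)" by blast
  then have lt: "card (snd (m a) \<inter> S) < p"
    using psubset_card_mono[OF vm_fin[OF v a]] vm(2)[OF v a] by metis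
  have "E p m S < (\<Sum>b\<in>agents p. p)" unfolding E_def
  proof (rule sum_strict_mono_ex1)
    show "finite (agents p)" by simp
    show "\<forall>b\<in>agents p. card (snd (m b) \<inter> S) \<le> p"
    proof
      fix b assume b: "b \<in> agents p"
      have "card (snd (m b) \<inter> S) \<le> card (snd (m b))"
        by (rule card_mono[OF vm_fin[OF v b]]) blast
      then show "card (snd (m b) \<inter> S) \<le> p" using vm(2)[OF v b] by simp
    qed
    show "\<exists>b\<in>agents p. card (snd (m b) \<inter> S) < p" using a lt by blast
  qed
  then show False using ge by simp
qed

lemma zero_agent: "0 \<in> agents p" by (simp add: agents_def)

lemma E_lt_nobloc:
  assumes v: "valid_msgs p m" and p: "p \<ge> 1" and nb: "\<not> (\<exists>x B. is_bloc p m x B)"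
  shows "E p m (voters p m z) < (2*p+1)*p"
proof (rule ccontr)
  assume "\<not> E p m (voters p m z) < (2*p+1)*p"
  then have ge: "E p m (voters p m z) \<ge> (2*p+1)*p" by simp
  let ?Z = "voters p m z"
  have sub: "\<forall>a\<in>agents p. snd (m a) \<subseteq> ?Z" using all_in[OF v ge] by blast
  have "snd (m 0) \<noteq> {}" using vm(2)[OF v zero_agent] p by auto
  then have ne: "?Z \<noteq> {}" using sub zero_agent by blast
  have "is_bloc p m z ?Z" unfolding bloc_iff[OF v]
    using ne sub by (auto simp: voters_def)
  then show False using nb by blast
qed

lemma E_sum:
  assumes v: "valid_msgs p m" and zw: "z \<noteq> w"
  shows "E p m (voters p m z) + E p m (voters p m w) = (2*p+1)*p"
proof -
  have "E p m (voters p m z) + E p m (voters p m w) = (\<Sum>b\<in>agents p. p)"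
    unfolding E_def sum.distrib[symmetric]
  proof (rule sum.cong[OF refl])
    fix b assume b: "b \<in> agents p"
    have u: "snd (m b) \<inter> voters p m z \<union> snd (m b) \<inter> voters p m w = snd (m b)"
    proof -
      have "\<forall>j\<in>agents p. fst (m j) = z \<or> fst (m j) = w" using zw by (metis opt.exhaust)
      then show ?thesis using vm(1)[OF v b] by (auto simp: voters_def)
    qed
    have d: "snd (m b) \<inter> voters p m z \<inter> (snd (m b) \<inter> voters p m w) = {}"
      using zw by (auto simp: voters_def)
    have f: "finite (snd (m b))" using vm_fin[OF v b] .
    have "card (snd (m b) \<inter> voters p m z) + card (snd (m b) \<inter> voters p m w) = card (snd (m b))"
      using card_Un_disjoint[of "snd (m b) \<inter> voters p m z" "snd (m b) \<inter> voters p m w"] u d f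
      by (metis finite_Int)
    then show "card (snd (m b) \<inter> voters p m z) + card (snd (m b) \<inter> voters p m w) = p"
      using vm(2)[OF v b] by simp
  qed
  then show ?thesis by simp
qed

lemma ne_valid: "nash_eq p R m \<Longrightarrow> valid_msgs p m"
  by (simp add: nash_eq_def)

lemma ne_nodev: "nash_eq p R m \<Longrightarrow> i \<in> agents p \<Longrightarrow> mi \<in> msg_space p i \<Longrightarrow>
   \<not> (chi_BF p (m(i := mi)) (top (R i)) > chi_BF p m (top (R i)))"
  by (simp add: nash_eq_def)

lemma dev:
  assumes ne: "nash_eq p R m" and nb: "\<not> (\<exists>x B. is_bloc p m x B)" and p: "p \<ge> 1"
    and i: "i \<in> agents p" and ms: "(top (R i), c') \<in> msg_space p i"
  shows "E p (m(i:=(top (R i), c'))) (voters p (m(i:=(top (R i), c'))) (top (R i)))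
         \<le> E p m (voters p m (top (R i)))"
proof -
  define z where "z = top (R i)"
  define m' where "m' = m(i:=(z, c'))"
  have v: "valid_msgs p m" using ne by (simp add: nash_eq_def)
  have v': "valid_msgs p m'" unfolding m'_def z_def by (rule valid_upd[OF v ms])
  have nd: "\<not> (chi_BF p m' z > chi_BF p m z)" unfolding m'_def z_def by (rule ne_nodev[OF ne i ms])
  have cm: "chi_BF p m = eta p m" using chi_nobloc[OF nb] .
  have "(2*p+1)*p > 0" using p by simp
  then have D: "real ((2*p+1)*p) > 0" by (simp only: of_nat_0_less_iff)
  have lt: "E p m (voters p m z) < (2*p+1)*p" by (rule E_lt_nobloc[OF v p nb])
  show ?thesis
  proof (cases "\<exists>x B. is_bloc p m' x B")
    case True
    then obtain x B where b: "is_bloc p m' x B" by blast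
    have "x = z"
    proof (cases "i \<in> B")
      case True
      then show ?thesis using b unfolding is_bloc_def m'_def by auto
    next
      case False
      then have "is_bloc p m x B" using bloc_dev b unfolding m'_def by blast
      then show ?thesis using nb by blast
    qed
    then have "chi_BF p m' z = 1" using chi_bloc[OF b] by (simp add: degen_def)
    moreover have "chi_BF p m z < 1"
    proof -
      have r: "real (E p m (voters p m z)) < real ((2*p+1)*p)" using lt by (simp only: of_nat_less_iff)
      then have "real (E p m (voters p m z)) / real ((2*p+1)*p) < 1" using D by (simp only: divide_less_eq_1_pos)
      then show ?thesis unfolding cm eta_E[OF v] .
    qed
    ultimately show ?thesis using nd by simp
  next
    case False
    then have cm': "chi_BF p m' = eta p m'" by (rule chi_nobloc)
    have "chi_BF p m' z \<le> chi_BF p m z" using nd by (simp only: not_less)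
    then have "eta p m' z \<le> eta p m z" by (simp only: cm cm')
    then have "real (E p m' (voters p m' z)) / real ((2*p+1)*p) \<le> real (E p m (voters p m z)) / real ((2*p+1)*p)"
      by (simp only: eta_E[OF v] eta_E[OF v'])
    then have "real (E p m' (voters p m' z)) \<le> real (E p m (voters p m z))"
      using D by (simp add: divide_le_cancel)
    then show ?thesis unfolding m'_def z_def by simp
  qed
qed


lemma A_nom:
  assumes ne: "nash_eq p R m" and nb: "\<not> (\<exists>x B. is_bloc p m x B)" and p: "p \<ge> 1"
    and i: "i \<in> agents p" and a: "a \<in> agents p" and ia: "i \<in> snd (m a)"
  shows "fst (m i) = top (R i)"
proof (rule ccontr)
  assume nz: "fst (m i) \<noteq> top (R i)"
  define z where "z = top (R i)"
  define m' where "m' = m(i:=(z, snd (m i)))"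
  have v: "valid_msgs p m" using ne by (simp add: nash_eq_def)
  have ms: "(top (R i), snd (m i)) \<in> msg_space p i"
    using vm[OF v i] by (simp add: msg_space_def)
  have le: "E p m' (voters p m' z) \<le> E p m (voters p m z)"
    using dev[OF ne nb p i ms] unfolding m'_def z_def .
  have vz: "voters p m' z = insert i (voters p m z)"
    using i by (auto simp: voters_def m'_def)
  have sn: "snd (m' b) = snd (m b)" for b by (simp add: m'_def)
  have "E p m (voters p m z) < E p m' (voters p m' z)"
    unfolding E_def vz sn
  proof (rule sum_strict_mono_ex1)
    show "finite (agents p)" by simp
    show "\<forall>b\<in>agents p. card (snd (m b) \<inter> voters p m z) \<le> card (snd (m b) \<inter> insert i (voters p m z))"
    proof
      fix b assume b: "b \<in> agents p"
      show "card (snd (m b) \<inter> voters p m z) \<le> card (snd (m b) \<inter> insert i (voters p m z))"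
        by (rule card_mono) (use vm_fin[OF v b] in auto)
    qed
    have "i \<notin> voters p m z" using nz by (simp add: voters_def z_def)
    then have "snd (m a) \<inter> voters p m z \<subset> snd (m a) \<inter> insert i (voters p m z)"
      using ia by blast
    then show "\<exists>b\<in>agents p. card (snd (m b) \<inter> voters p m z) < card (snd (m b) \<inter> insert i (voters p m z))"
      using a psubset_card_mono[OF finite_Int[OF disjI1[OF vm_fin[OF v a]]]] by (intro bexI[of _ a])
  qed
  then show False using le by simp
qed

lemma B_sub:
  assumes ne: "nash_eq p R m" and nb: "\<not> (\<exists>x B. is_bloc p m x B)" and p: "p \<ge> 1"
    and i: "i \<in> agents p" and cz: "card (voters p m (top (R i)) - {i}) \<ge> p"
  shows "snd (m i) \<subseteq> voters p m (top (R i))"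
proof (rule ccontr)
  assume ns: "\<not> snd (m i) \<subseteq> voters p m (top (R i))"
  define z where "z = top (R i)"
  define Z where "Z = voters p m z"
  define c where "c = snd (m i)"
  have v: "valid_msgs p m" using ne by (simp add: nash_eq_def)
  have cI: "c \<subseteq> agents p - {i}" "card c = p" "finite c" using vm[OF v i] vm_fin[OF v i] by (auto simp: c_def)
  obtain k where k: "k \<in> c" "k \<notin> Z" using ns by (auto simp: c_def Z_def z_def)
  have ZI: "Z \<subseteq> agents p" by (auto simp: Z_def voters_def)
  have "\<not> Z - {i} \<subseteq> c"
  proof
    assume "Z - {i} \<subseteq> c"
    then have "Z - {i} \<subseteq> c - {k}" using k by blast
    then have "card (Z - {i}) \<le> card (c - {k})" using cI(3) by (simp add: card_mono)
    also have "\<dots> < p" using card_Diff1_less[OF cI(3) k(1)] cI(2) by simp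
    finally show False using cz by (simp add: Z_def z_def)
  qed
  then obtain l where l: "l \<in> Z" "l \<noteq> i" "l \<notin> c" by blast
  define c' where "c' = insert l (c - {k})"
  have ms: "(top (R i), c') \<in> msg_space p i"
  proof -
    have "c' \<subseteq> agents p - {i}" using l ZI cI unfolding c'_def by blast
    moreover have "card c' = p"
    proof -
      have "card (c - {k}) = p - 1" using k cI by simp
      then have "card c' = Suc (p - 1)" unfolding c'_def using l cI(3) by simp
      then show ?thesis using p by simp
    qed
    ultimately show ?thesis by (simp add: msg_space_def)
  qed
  define m' where "m' = m(i:=(z, c'))"
  have le: "E p m' (voters p m' z) \<le> E p m Z"
    using dev[OF ne nb p i ms] unfolding m'_def z_def Z_def .
  have v': "valid_msgs p m'" unfolding m'_def z_def by (rule valid_upd[OF v ms])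
  have ZZ: "Z \<subseteq> voters p m' z" by (auto simp: Z_def voters_def m'_def)
  have "E p m' Z \<le> E p m' (voters p m' z)" unfolding E_def
  proof (rule sum_mono)
    fix b assume b: "b \<in> agents p"
    show "card (snd (m' b) \<inter> Z) \<le> card (snd (m' b) \<inter> voters p m' z)"
      by (rule card_mono) (use vm_fin[OF v' b] ZZ in auto)
  qed
  moreover have "E p m Z < E p m' Z" unfolding E_def
  proof (rule sum_strict_mono_ex1)
    show "finite (agents p)" by simp
    have ci: "c \<inter> Z \<subset> c' \<inter> Z" using l k unfolding c'_def by blast
    have fc': "finite c'" unfolding c'_def using cI(3) by simp
    show "\<forall>b\<in>agents p. card (snd (m b) \<inter> Z) \<le> card (snd (m' b) \<inter> Z)"
    proof
      fix b assume b: "b \<in> agents p"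
      show "card (snd (m b) \<inter> Z) \<le> card (snd (m' b) \<inter> Z)"
      proof (cases "b = i")
        case True
        then show ?thesis using psubset_card_mono[OF finite_Int[OF disjI1[OF fc']] ci] by (simp add: m'_def c_def)
      qed (simp add: m'_def)
    qed
    show "\<exists>b\<in>agents p. card (snd (m b) \<inter> Z) < card (snd (m' b) \<inter> Z)"
      using i ci fc' by (intro bexI[of _ i]) (auto simp: m'_def c_def intro: psubset_card_mono)
  qed
  ultimately show False using le by simp
qed


lemma voters_card:
  "card (voters p m OA) + card (voters p m OB) = 2*p+1"
proof -
  have o: "y = OA \<or> y = OB" for y by (cases y) auto
  have u: "voters p m OA \<union> voters p m OB = agents p"
    using o by (auto simp: voters_def)
  have d: "voters p m OA \<inter> voters p m OB = {}" by (auto simp: voters_def)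
  have f: "finite (voters p m OA)" "finite (voters p m OB)" by (auto simp: voters_def)
  show ?thesis using card_Un_disjoint[OF f d] u by simp
qed

lemma NE_has_bloc:
  assumes ne: "nash_eq p R m" and p: "p \<ge> 1"
  shows "\<exists>x B. is_bloc p m x B"
proof (rule ccontr)
  assume nb: "\<not> (\<exists>x B. is_bloc p m x B)"
  have v: "valid_msgs p m" using ne by (simp add: nash_eq_def)
  obtain z w where zw: "z \<noteq> w" and cz: "card (voters p m z) \<ge> p+1"
  proof (cases "card (voters p m OA) \<ge> p+1")
    case True
    then show ?thesis using that[of OA OB] by simp
  next
    case False
    then have "card (voters p m OB) \<ge> p+1" using voters_card[of p m] by simp
    then show ?thesis using that[of OB OA] by simp
  qed
  define Z where "Z = voters p m z"
  have "E p m (voters p m w) < (2*p+1)*p" by (rule E_lt_nobloc[OF v p nb])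
  then have "E p m Z > 0" using E_sum[OF v zw] unfolding Z_def by simp
  then have "\<exists>a\<in>agents p. card (snd (m a) \<inter> Z) \<noteq> 0"
  proof (rule contrapos_pp)
    assume "\<not> (\<exists>a\<in>agents p. card (snd (m a) \<inter> Z) \<noteq> 0)"
    then have "E p m Z = 0" unfolding E_def by simp
    then show "\<not> E p m Z > 0" by simp
  qed
  then obtain a where a: "a \<in> agents p" "card (snd (m a) \<inter> Z) \<noteq> 0" by blast
  then have "snd (m a) \<inter> Z \<noteq> {}" by auto
  then obtain j where j: "j \<in> snd (m a)" "j \<in> Z" by blast
  have K: "top (R k) = fst (m k)" if "k \<in> agents p" "b \<in> agents p" "k \<in> snd (m b)" for k b
    using A_nom[OF ne nb p that] by simp
  define S where "S = {k\<in>Z. top (R k) = z}"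
  have ZI: "Z \<subseteq> agents p" by (auto simp: Z_def voters_def)
  have jS: "j \<in> S" using K[of j a] j a ZI unfolding S_def Z_def voters_def by auto
  have clos: "snd (m s) \<subseteq> S" if s: "s \<in> S" for s
  proof -
    have sI: "s \<in> agents p" and sz: "top (R s) = z" "s \<in> Z" using s ZI unfolding S_def by auto
    have fZ: "finite Z" by (rule rev_finite_subset[OF fin_agents ZI])
    have "card (Z - {s}) = card Z - 1" using sz(2) fZ by simp
    then have "card (voters p m (top (R s)) - {s}) \<ge> p" using cz sz unfolding Z_def by simp
    from B_sub[OF ne nb p sI this] have sub: "snd (m s) \<subseteq> Z" using sz unfolding Z_def by simp
    show ?thesis
    proof
      fix k assume k: "k \<in> snd (m s)"
      then have kZ: "k \<in> Z" using sub by blast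
      then have "k \<in> agents p" using ZI by blast
      then have "top (R k) = fst (m k)" using K[of k s] sI k by simp
      then show "k \<in> S" using kZ unfolding S_def Z_def voters_def by simp
    qed
  qed
  have "is_bloc p m z S" unfolding bloc_iff[OF v]
    using jS clos ZI by (auto simp: S_def Z_def voters_def)
  then show False using nb by blast
qed


lemma Maj_card: "card {i\<in>agents p. top (R i) = Maj p R} \<ge> p+1"
proof -
  define Sa where "Sa = {i\<in>agents p. (OA,OB) \<in> R i}"
  have ta: "{i\<in>agents p. top (R i) = OA} = Sa" by (auto simp: Sa_def top_def)
  have tb: "{i\<in>agents p. top (R i) = OB} = agents p - Sa" by (auto simp: Sa_def top_def)
  show ?thesis
  proof (cases "card Sa \<ge> p+1")
    case True
    then have "Maj p R = OA" by (simp add: Maj_def Sa_def)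
    then show ?thesis using ta True by simp
  next
    case False
    then have "Maj p R = OB" by (simp add: Maj_def Sa_def)
    moreover have "card (agents p - Sa) = 2*p+1 - card Sa"
      by (simp add: card_Diff_subset Sa_def)
    ultimately show ?thesis using tb False by simp
  qed
qed

lemma min_bloc_sub:
  assumes v: "valid_msgs p m" and b: "is_bloc p m w B0"
    and mn: "\<forall>B'. is_bloc p m w B' \<longrightarrow> card B0 \<le> card B'"
    and b2: "is_bloc p m w B2"
  shows "B0 \<subseteq> B2"
proof -
  have "B0 \<inter> B2 \<noteq> {}" apply (rule big_inter) using b b2 unfolding is_bloc_def by auto
  then have "is_bloc p m w (B0 \<inter> B2)" using b b2 unfolding bloc_iff[OF v] by blast
  then have "card B0 \<le> card (B0 \<inter> B2)" using mn by blast
  moreover have "finite B0" using b unfolding is_bloc_def using rev_finite_subset[OF fin_agents] by blast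
  ultimately have "B0 \<inter> B2 = B0" by (metis card_seteq inf_le1)
  then show ?thesis by blast
qed

lemma bloc_Maj:
  assumes ne: "nash_eq p R m" and p: "p \<ge> 1" and b: "is_bloc p m w B"
  shows "w = Maj p R"
proof (rule ccontr)
  assume wx: "w \<noteq> Maj p R"
  define x where "x = Maj p R"
  have v: "valid_msgs p m" using ne by (simp add: nash_eq_def)
  obtain B0 where b0: "is_bloc p m w B0" and mn: "\<forall>B'. is_bloc p m w B' \<longrightarrow> card B0 \<le> card B'"
    using ex_has_least_nat[of "\<lambda>B. is_bloc p m w B" B card] b by blast
  have B0I: "B0 \<subseteq> agents p" and cB0: "card B0 \<ge> p+1" using b0 unfolding is_bloc_def by auto
  have fB0: "finite B0" by (rule rev_finite_subset[OF fin_agents B0I])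
  have "B0 \<inter> {i\<in>agents p. top (R i) = x} \<noteq> {}"
    by (rule big_inter) (use B0I cB0 Maj_card[of p R] in \<open>auto simp: x_def\<close>)
  then obtain i where i: "i \<in> B0" "i \<in> agents p" "top (R i) = x" by blast
  have "\<exists>j\<in>B0. i \<in> snd (m j)"
  proof (rule ccontr)
    assume nn: "\<not> (\<exists>j\<in>B0. i \<in> snd (m j))"
    have "card (B0 - {i}) < card B0" by (rule card_Diff1_less[OF fB0 i(1)])
    moreover have "is_bloc p m w (B0 - {i})" unfolding bloc_iff[OF v]
    proof (intro conjI)
      show "B0 - {i} \<subseteq> agents p" using B0I by blast
      have "card (B0 - {i}) \<ge> p" using cB0 fB0 i(1) by simp
      then show "B0 - {i} \<noteq> {}" using p by (metis card.empty le_zero_eq not_one_le_zero)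
      show "\<forall>j\<in>B0 - {i}. fst (m j) = w \<and> snd (m j) \<subseteq> B0 - {i}"
        using b0 nn unfolding is_bloc_def by blast
    qed
    ultimately show False using mn by fastforce
  qed
  then obtain j where j: "j \<in> B0" "i \<in> snd (m j)" by blast
  have jI: "j \<in> agents p" using j B0I by blast
  have ji: "j \<noteq> i" using vm(1)[OF v jI] j(2) by blast
  have ms: "(top (R i), snd (m i)) \<in> msg_space p i"
    using vm[OF v i(2)] by (simp add: msg_space_def)
  define m' where "m' = m(i := (top (R i), snd (m i)))"
  have v': "valid_msgs p m'" unfolding m'_def by (rule valid_upd[OF v ms])
  have nd: "\<not> (chi_BF p m' x > chi_BF p m x)"
    using ne_nodev[OF ne i(2) ms] i(3) unfolding m'_def by simp
  have cm: "chi_BF p m x = 0" using chi_bloc[OF b0] wx by (simp add: degen_def x_def)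
  show False
  proof (cases "\<exists>u B'. is_bloc p m' u B'")
    case True
    then obtain u B' where b': "is_bloc p m' u B'" by blast
    show False
    proof (cases "i \<in> B'")
      case True
      then have "u = x" using b' i(3) unfolding is_bloc_def m'_def by auto
      then have "chi_BF p m' x = 1" using chi_bloc[OF b'] by (simp add: degen_def)
      then show False using nd cm by simp
    next
      case False
      then have bm: "is_bloc p m u B'" using bloc_dev b' unfolding m'_def by blast
      then have "u = w" using bloc_unique b0 by blast
      then have "B0 \<subseteq> B'" using min_bloc_sub[OF v b0 mn] bm by blast
      then show False using False i(1) by blast
    qed
  next
    case False
    then have cm': "chi_BF p m' = eta p m'" by (rule chi_nobloc)
    have "i \<in> snd (m' j) \<inter> voters p m' x" using j ji i unfolding m'_def voters_def by auto
    then have "card (snd (m' j) \<inter> voters p m' x) \<noteq> 0" using vm_fin[OF v' jI] by auto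
    moreover have "card (snd (m' j) \<inter> voters p m' x) \<le> E p m' (voters p m' x)"
      unfolding E_def by (rule member_le_sum[OF jI]) auto
    ultimately have "E p m' (voters p m' x) > 0" by simp
    moreover have "(2*p+1)*p > 0" using p by simp
    ultimately have "eta p m' x > 0" unfolding eta_E[OF v']
      by (intro divide_pos_pos) (simp_all only: of_nat_0_less_iff)
    then show False using nd cm cm' by simp
  qed
qed


lemma chi_le1:
  assumes v: "valid_msgs p m" and p: "p \<ge> 1"
  shows "chi_BF p m z \<le> 1"
proof (cases "\<exists>x B. is_bloc p m x B")
  case True
  then obtain x B where "is_bloc p m x B" by blast
  then show ?thesis using chi_bloc by (simp add: degen_def)
next
  case False
  have D: "real ((2*p+1)*p) > 0" using p by (simp only: of_nat_0_less_iff) simp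
  have "real (E p m (voters p m z)) \<le> real ((2*p+1)*p)" using E_le[OF v] by (simp only: of_nat_le_iff)
  then have "eta p m z \<le> 1" unfolding eta_E[OF v] using D by simp
  then show ?thesis using chi_nobloc[OF False] by simp
qed

lemma NE_exists:
  assumes p: "p \<ge> 1"
  shows "\<exists>m. nash_eq p R m \<and> chi_BF p m = degen (Maj p R)"
proof -
  define x where "x = Maj p R"
  obtain S where S: "S \<subseteq> {i\<in>agents p. top (R i) = x}" "card S = p+1" "finite S"
    using obtain_subset_with_card_n[OF Maj_card[of p R]] unfolding x_def by blast
  have SI: "S \<subseteq> agents p" using S by blast
  obtain s0 where s0: "s0 \<in> S" using S(2) by fastforce
  define m :: "nat \<Rightarrow> message" where "m = (\<lambda>j. (x, S - {if j \<in> S then j else s0}))"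
  have v: "valid_msgs p m" unfolding valid_msgs_def
  proof
    fix i assume i: "i \<in> agents p"
    have "(if i \<in> S then i else s0) \<in> S" using s0 by simp
    then have "card (S - {if i \<in> S then i else s0}) = p" using S(2,3) by simp
    moreover have "S - {if i \<in> S then i else s0} \<subseteq> agents p - {i}" using SI by auto
    ultimately show "m i \<in> msg_space p i" by (simp add: m_def msg_space_def)
  qed
  have bS: "is_bloc p m x S" unfolding bloc_iff[OF v] using SI s0 by (auto simp: m_def)
  have cm: "chi_BF p m = degen x" by (rule chi_bloc[OF bS])
  have "nash_eq p R m" unfolding nash_eq_def
  proof (intro conjI v ballI)
    fix i mi assume i: "i \<in> agents p" and ms: "mi \<in> msg_space p i"
    show "\<not> chi_BF p m (top (R i)) < chi_BF p (m(i := mi)) (top (R i))"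
    proof (cases "i \<in> S")
      case True
      then have "top (R i) = x" using S by blast
      then have "chi_BF p m (top (R i)) = 1" using cm by (simp add: degen_def)
      moreover have "chi_BF p (m(i := mi)) (top (R i)) \<le> 1"
        by (rule chi_le1[OF valid_upd[OF v ms] p])
      ultimately show ?thesis by simp
    next
      case False
      have "is_bloc p (m(i := mi)) x S" using bS False unfolding is_bloc_def by auto
      then have "chi_BF p (m(i := mi)) = degen x" by (rule chi_bloc)
      then show ?thesis using cm by simp
    qed
  qed
  then show ?thesis using cm unfolding x_def by blast
qed

theorem proposition1:
  fixes p :: nat
  assumes "p \<ge> 1"
  shows "\<forall>R. profile p R \<longrightarrow>
           (\<forall>m. nash_eq p R m \<longrightarrow> chi_BF p m = degen (Maj p R)) \<and>
           (\<exists>m. nash_eq p R m \<and> chi_BF p m = degen (Maj p R))"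
proof (intro allI impI conjI)
  fix R m assume "nash_eq p R m"
  then show "chi_BF p m = degen (Maj p R)"
    using NE_has_bloc[OF _ assms] bloc_Maj[OF _ assms] chi_bloc by metis
next
  fix R show "\<exists>m. nash_eq p R m \<and> chi_BF p m = degen (Maj p R)" by (rule NE_exists[OF assms])
qed

end
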